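(* Let $q$ be an indecomposable pattern. Then $\lim_{n\to\infty}\sqrt[n]{\textup{Sav}_n(q)}$ exists (and is finite).
   Context: Permutations are written in one-line notation $p=p_1\cdots p_n$ with $p_i=p(i)$. $p$ contains a pattern $q=q_1\cdots q_k$ if there are indices $i_1<\cdots<i_k$ with $p_{i_r}<p_{i_s}$ iff $q_r<q_s$; otherwise $p$ avoids $q$. $p^2(i)=p(p(i))$. A permutation $p$ is strongly $q$-avoiding if both $p$ and $p^2$ avoid $q$, and $\textup{Sav}_n(q)$ is the number of strongly $q$-avoiding permutations of length $n$. The direct sum of permutations $p$ (length $n$) and $p'$ (length $m$) is the permutation $p\oplus p'$ of length $n+m$ equal to $p_1\cdots p_n(p'_1+n)\cdots(p'_m+n)$. A pattern $q$ is indecomposable if it cannot be written as $q=a\oplus b$ with $a,b$ both nonempty, i.e. there is no cut of $q$ into a nonempty prefix and nonempty suffix with every entry of the prefix smaller than every entry of the suffix. *)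

theory Defs
  imports Complex_Main
begin

text \<open>Permutations in one-line notation as lists: p = [p_1, ..., p_n], list index i-1 holds p_i,
  values in {1..n}.\<close>

definition is_perm :: "nat \<Rightarrow> nat list \<Rightarrow> bool" where
  "is_perm n p \<longleftrightarrow> length p = n \<and> distinct p \<and> set p = {1..n}"

definition pval :: "nat list \<Rightarrow> nat \<Rightarrow> nat" where
  "pval p i = p ! (i - 1)"

definition perm_sq :: "nat list \<Rightarrow> nat list" where
  "perm_sq p = map (\<lambda>i. pval p (pval p i)) [1..<length p + 1]"

definition contains :: "nat list \<Rightarrow> nat list \<Rightarrow> bool" where
  "contains p q \<longleftrightarrow> (\<exists>ix :: nat \<Rightarrow> nat.
      (\<forall>r s. r < s \<and> s < length q \<longrightarrow> ix r < ix s) \<and>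
      (\<forall>r < length q. ix r < length p) \<and>
      (\<forall>r < length q. \<forall>s < length q. (p ! ix r < p ! ix s \<longleftrightarrow> q ! r < q ! s)))"

definition avoids :: "nat list \<Rightarrow> nat list \<Rightarrow> bool" where
  "avoids p q \<longleftrightarrow> \<not> contains p q"

definition strongly_avoids :: "nat list \<Rightarrow> nat list \<Rightarrow> bool" where
  "strongly_avoids p q \<longleftrightarrow> avoids p q \<and> avoids (perm_sq p) q"

definition Sav :: "nat \<Rightarrow> nat list \<Rightarrow> nat" where
  "Sav n q = card {p. is_perm n p \<and> strongly_avoids p q}"

definition indecomposable :: "nat list \<Rightarrow> bool" where
  "indecomposable q \<longleftrightarrow>
     \<not> (\<exists>j. 0 < j \<and> j < length q \<and>
            (\<forall>a < j. \<forall>b. j \<le> b \<and> b < length q \<longrightarrow> q ! a < q ! b))"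

end

theory Submission
  imports Defs "HOL-Library.FuncSet"
begin

definition pcont :: "(nat\<times>nat) set \<Rightarrow> nat \<Rightarrow> (nat\<Rightarrow>nat) \<Rightarrow> (nat\<Rightarrow>nat) \<Rightarrow> bool" where
 "pcont S k \<rho> \<sigma> \<longleftrightarrow> (\<exists>f. (\<forall>t<k. f t \<in> S) \<and>
    (\<forall>i<k. \<forall>j<k. \<rho> i < \<rho> j \<longrightarrow> fst (f i) < fst (f j)) \<and>
    (\<forall>i<k. \<forall>j<k. \<sigma> i < \<sigma> j \<longrightarrow> snd (f i) < snd (f j)))"

definition blk :: "nat \<Rightarrow> nat\<times>nat \<Rightarrow> nat\<times>nat" where
  "blk K z = (fst z div K, snd z div K)"

definition bl :: "nat \<Rightarrow> (nat\<times>nat) set \<Rightarrow> nat\<times>nat \<Rightarrow> (nat\<times>nat) set" where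
  "bl K S b = {z\<in>S. blk K z = b}"

definition sqr :: "nat \<Rightarrow> (nat\<times>nat) set" where "sqr n = {..<n} \<times> {..<n}"

definition swp :: "nat\<times>nat \<Rightarrow> nat\<times>nat" where "swp z = (snd z, fst z)"

lemma swp_swp[simp]: "swp (swp z) = z" by (simp add: swp_def)
lemma inj_swp: "inj swp" by (metis injI swp_swp)

lemma pcont_swp1: "pcont S k \<rho> \<sigma> \<Longrightarrow> pcont (swp ` S) k \<sigma> \<rho>"
proof -
  assume "pcont S k \<rho> \<sigma>"
  then obtain f where f: "\<forall>t<k. f t \<in> S" "\<forall>i<k. \<forall>j<k. \<rho> i < \<rho> j \<longrightarrow> fst (f i) < fst (f j)"
    "\<forall>i<k. \<forall>j<k. \<sigma> i < \<sigma> j \<longrightarrow> snd (f i) < snd (f j)" unfolding pcont_def by blast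
  show ?thesis unfolding pcont_def
    by (rule exI[of _ "\<lambda>t. swp (f t)"]) (use f in \<open>auto simp: swp_def\<close>)
qed

lemma pcont_swp: "pcont (swp ` S) k \<sigma> \<rho> \<longleftrightarrow> pcont S k \<rho> \<sigma>"
proof
  assume "pcont (swp ` S) k \<sigma> \<rho>"
  then have "pcont (swp ` swp ` S) k \<rho> \<sigma>" by (rule pcont_swp1)
  moreover have "swp ` swp ` S = S" by (simp add: image_image)
  ultimately show "pcont S k \<rho> \<sigma>" by simp
qed (rule pcont_swp1)

lemma div_less_imp_less: "(a::nat) div K < b div K \<Longrightarrow> a < b"
  by (metis div_le_mono not_less)

lemma contract_pcont:
  assumes "pcont (blk K ` S) k \<rho> \<sigma>"
  shows "pcont S k \<rho> \<sigma>"
proof -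
  obtain f where f: "\<forall>t<k. f t \<in> blk K ` S" "\<forall>i<k. \<forall>j<k. \<rho> i < \<rho> j \<longrightarrow> fst (f i) < fst (f j)"
    "\<forall>i<k. \<forall>j<k. \<sigma> i < \<sigma> j \<longrightarrow> snd (f i) < snd (f j)" using assms unfolding pcont_def by blast
  have "\<forall>t. \<exists>z. t < k \<longrightarrow> z \<in> S \<and> blk K z = f t" using f(1) by (metis imageE)
  then have "\<exists>g. \<forall>t. t < k \<longrightarrow> g t \<in> S \<and> blk K (g t) = f t" by (rule choice)
  then obtain g where g: "\<And>t. t < k \<Longrightarrow> g t \<in> S \<and> blk K (g t) = f t" by blast
  show ?thesis unfolding pcont_def
  proof (rule exI[of _ g], intro conjI allI impI)
    fix t assume "t < k" then show "g t \<in> S" using g by blast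
  next
    fix i j assume "i < k" "j < k" "\<rho> i < \<rho> j"
    then have "fst (f i) < fst (f j)" using f by blast
    moreover have "fst (f i) = fst (g i) div K" "fst (f j) = fst (g j) div K"
      using g[OF \<open>i<k\<close>] g[OF \<open>j<k\<close>] by (metis blk_def fst_conv)+
    ultimately have "fst (g i) div K < fst (g j) div K" by simp
    then show "fst (g i) < fst (g j)" by (rule div_less_imp_less)
  next
    fix i j assume "i < k" "j < k" "\<sigma> i < \<sigma> j"
    then have "snd (f i) < snd (f j)" using f by blast
    moreover have "snd (f i) = snd (g i) div K" "snd (f j) = snd (g j) div K"
      using g[OF \<open>i<k\<close>] g[OF \<open>j<k\<close>] by (metis blk_def snd_conv)+
    ultimately have "snd (g i) div K < snd (g j) div K" by simp
    then show "snd (g i) < snd (g j)" by (rule div_less_imp_less)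
  qed
qed

lemma sorted_nth_less:
  assumes "finite A" "i < j" "j < card A"
  shows "sorted_list_of_set A ! i < sorted_list_of_set A ! j"
  using sorted_wrt_nth_less[OF strict_sorted_list_of_set[of A]] assms by simp

lemma sorted_nth_in:
  assumes "finite A" "i < card A"
  shows "sorted_list_of_set A ! i \<in> A"
  using assms by (metis length_sorted_list_of_set nth_mem set_sorted_list_of_set)

lemma wide_pattern:
  assumes "finite F" "k \<le> card F" "\<forall>b\<in>F. snd b = y0" "finite A" "card A = k"
    "\<forall>b\<in>F. A \<subseteq> snd ` bl K S b" "\<forall>t<k. \<rho> t < k" "\<forall>t<k. \<sigma> t < k"
  shows "pcont S k \<rho> \<sigma>"
proof -
  obtain F' where F': "F' \<subseteq> F" "card F' = k"
    using assms(2) by (meson obtain_subset_with_card_n)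
  have fin': "finite F'" using F' assms(1) finite_subset by blast
  have inj: "inj_on fst F'"
    using F'(1) assms(3) by (intro inj_onI) (metis prod.collapse subsetD)
  have cR: "card (fst ` F') = k" using inj F' card_image by fastforce
  define rs where "rs = sorted_list_of_set (fst ` F')"
  define cs where "cs = sorted_list_of_set A"
  have "\<forall>t. \<exists>z. t < k \<longrightarrow> z \<in> S \<and> blk K z = (rs ! \<rho> t, y0) \<and> snd z = cs ! \<sigma> t"
  proof (intro allI)
    fix t show "\<exists>z. t < k \<longrightarrow> z \<in> S \<and> blk K z = (rs ! \<rho> t, y0) \<and> snd z = cs ! \<sigma> t"
    proof (cases "t < k")
      case True
      then have "rs ! \<rho> t \<in> fst ` F'" unfolding rs_def using cR assms(7) fin'
        by (intro sorted_nth_in) auto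
      then obtain b where b: "b \<in> F'" "fst b = rs ! \<rho> t" by (metis imageE)
      then have bb: "b = (rs ! \<rho> t, y0)" using F'(1) assms(3) by (metis prod.collapse subsetD)
      have "cs ! \<sigma> t \<in> A" unfolding cs_def using assms(4,5,8) True by (intro sorted_nth_in) auto
      then have "cs ! \<sigma> t \<in> snd ` bl K S b" using assms(6) b F'(1) by blast
      then obtain z where "z \<in> bl K S b" "snd z = cs ! \<sigma> t" by (metis imageE)
      then show ?thesis using bb unfolding bl_def by (intro exI[of _ z]) auto
    qed simp
  qed
  then have "\<exists>f. \<forall>t. t < k \<longrightarrow> f t \<in> S \<and> blk K (f t) = (rs ! \<rho> t, y0) \<and> snd (f t) = cs ! \<sigma> t"
    by (rule choice)
  then obtain f where f: "\<And>t. t < k \<Longrightarrow> f t \<in> S \<and> blk K (f t) = (rs ! \<rho> t, y0) \<and> snd (f t) = cs ! \<sigma> t"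
    by blast
  show ?thesis unfolding pcont_def
  proof (rule exI[of _ f], intro conjI allI impI)
    fix t assume "t < k" then show "f t \<in> S" using f by blast
  next
    fix i j assume ij: "i < k" "j < k" "\<rho> i < \<rho> j"
    then have "rs ! \<rho> i < rs ! \<rho> j" unfolding rs_def using cR assms(7) fin'
      by (intro sorted_nth_less) auto
    moreover have "fst (f i) div K = rs ! \<rho> i" "fst (f j) div K = rs ! \<rho> j"
      using f[OF \<open>i<k\<close>] f[OF \<open>j<k\<close>] by (metis blk_def fst_conv)+
    ultimately have "fst (f i) div K < fst (f j) div K" by simp
    then show "fst (f i) < fst (f j)" by (rule div_less_imp_less)
  next
    fix i j assume ij: "i < k" "j < k" "\<sigma> i < \<sigma> j"
    then have "cs ! \<sigma> i < cs ! \<sigma> j" unfolding cs_def using assms(4,5,8)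
      by (intro sorted_nth_less) auto
    then show "snd (f i) < snd (f j)" using f[OF \<open>i<k\<close>] f[OF \<open>j<k\<close>] by auto
  qed
qed

lemma finite_sqr[simp]: "finite (sqr n)" by (simp add: sqr_def)

lemma div_eq_bounds: "0 < (K::nat) \<Longrightarrow> x div K = y \<Longrightarrow> y * K \<le> x \<and> x < y * K + K"
  by (metis add.commute div_mult_mod_eq le_add2 mod_less_divisor nat_add_left_cancel_less)

lemma card_fiber_bound:
  assumes "finite I" "A \<subseteq> (\<Union>i\<in>I. F i)" "\<forall>i\<in>I. card (F i) \<le> m" "\<forall>i\<in>I. finite (F i)"
  shows "card A \<le> card I * m"
proof -
  have "card A \<le> card (\<Union>i\<in>I. F i)" using assms by (intro card_mono) auto
  also have "\<dots> \<le> (\<Sum>i\<in>I. card (F i))" using assms(1) by (rule card_UN_le)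
  also have "\<dots> \<le> (\<Sum>i\<in>I. m)" using assms(3) by (intro sum_mono) auto
  finally show ?thesis by simp
qed

lemma wide_bound:
  assumes np: "\<not> pcont S k \<rho> \<sigma>" and mr: "\<forall>t<k. \<rho> t < k" and ms: "\<forall>t<k. \<sigma> t < k"
    and sub: "S \<subseteq> sqr (K*M)" and K0: "0 < K"
  shows "card {b \<in> sqr M. k \<le> card (snd ` bl K S b)} \<le> M * ((k-1) * (K choose k))"
proof -
  define Wy where "Wy y0 = {b \<in> sqr M. k \<le> card (snd ` bl K S b) \<and> snd b = y0}" for y0
  have eq: "{b \<in> sqr M. k \<le> card (snd ` bl K S b)} \<subseteq> (\<Union>y0\<in>{..<M}. Wy y0)"
    by (auto simp: Wy_def sqr_def)
  have per: "card (Wy y0) \<le> (K choose k) * (k-1)" for y0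
  proof -
    define I where "I = {y0*K..<y0*K+K}"
    have sI: "snd ` bl K S b \<subseteq> I" if "b \<in> Wy y0" for b
    proof
      fix y assume "y \<in> snd ` bl K S b"
      then obtain z where z: "z \<in> bl K S b" "y = snd z" by (metis imageE)
      then have "snd z div K = y0" using that by (auto simp: bl_def blk_def Wy_def)
      then show "y \<in> I" using div_eq_bounds[OF K0] z(2) unfolding I_def by auto
    qed
    have "\<forall>b. \<exists>A. b \<in> Wy y0 \<longrightarrow> A \<subseteq> snd ` bl K S b \<and> card A = k"
    proof (intro allI)
      fix b show "\<exists>A. b \<in> Wy y0 \<longrightarrow> A \<subseteq> snd ` bl K S b \<and> card A = k"
      proof (cases "b \<in> Wy y0")
        case True
        then have "k \<le> card (snd ` bl K S b)" by (simp add: Wy_def)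
        then obtain A where "A \<subseteq> snd ` bl K S b" "card A = k" by (meson obtain_subset_with_card_n)
        then show ?thesis by blast
      qed simp
    qed
    then have "\<exists>ch. \<forall>b. b \<in> Wy y0 \<longrightarrow> ch b \<subseteq> snd ` bl K S b \<and> card (ch b) = k"
      by (rule choice)
    then obtain ch where ch: "\<And>b. b \<in> Wy y0 \<Longrightarrow> ch b \<subseteq> snd ` bl K S b \<and> card (ch b) = k"
      by blast
    define Subs where "Subs = {A. A \<subseteq> I \<and> card A = k}"
    have cS: "card Subs = K choose k" unfolding Subs_def I_def by (simp add: n_subsets)
    have finW: "finite (Wy y0)" by (rule finite_subset[of _ "sqr M"]) (auto simp: Wy_def)
    have cover: "Wy y0 \<subseteq> (\<Union>A\<in>Subs. {b \<in> Wy y0. ch b = A})"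
    proof
      fix b assume b: "b \<in> Wy y0"
      then have "ch b \<in> Subs" using ch[OF b] sI[OF b] unfolding Subs_def by auto
      then show "b \<in> (\<Union>A\<in>Subs. {b \<in> Wy y0. ch b = A})" using b by blast
    qed
    have fib: "card {b \<in> Wy y0. ch b = A} \<le> k - 1" if "A \<in> Subs" for A
    proof (rule ccontr)
      assume "\<not> ?thesis"
      then have kc: "k \<le> card {b \<in> Wy y0. ch b = A}" by simp
      have "pcont S k \<rho> \<sigma>"
      proof (rule wide_pattern[OF _ kc, of y0 A])
        show "finite {b \<in> Wy y0. ch b = A}" using finW by simp
        show "\<forall>b\<in>{b \<in> Wy y0. ch b = A}. snd b = y0" by (auto simp: Wy_def)
        show "finite A" using that unfolding Subs_def I_def using finite_subset by blast
        show "card A = k" using that unfolding Subs_def by simp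
        show "\<forall>b\<in>{b \<in> Wy y0. ch b = A}. A \<subseteq> snd ` bl K S b" using ch by blast
      qed (use mr ms in auto)
      then show False using np by simp
    qed
    have "finite Subs" unfolding Subs_def I_def by simp
    from card_fiber_bound[OF this cover] fib finW show ?thesis using cS by simp
  qed
  have "card {b \<in> sqr M. k \<le> card (snd ` bl K S b)} \<le> card {..<M} * ((K choose k) * (k-1))"
  proof (rule card_fiber_bound[OF _ eq])
    show "\<forall>i\<in>{..<M}. finite (Wy i)"
      by (auto simp: Wy_def)
  qed (use per in auto)
  then show ?thesis by (simp add: mult.commute)
qed

lemma blk_sqr: "0 < K \<Longrightarrow> z \<in> sqr (K*M) \<Longrightarrow> blk K z \<in> sqr M"
  by (auto simp: sqr_def blk_def less_mult_imp_div_less mult.commute)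

lemma swp_sqr: "S \<subseteq> sqr n \<Longrightarrow> swp ` S \<subseteq> sqr n"
  by (auto simp: sqr_def swp_def)

lemma bl_swp: "bl K (swp ` S) (swp b) = swp ` bl K S b"
  by (auto simp: bl_def blk_def swp_def image_iff)

lemma snd_swp_img: "snd ` swp ` X = fst ` X"
  by (simp add: image_image swp_def)

lemma bl_sub_box: "bl K S b \<subseteq> {fst b*K..<fst b*K+K} \<times> {snd b*K..<snd b*K+K}" if "0 < K"
proof
  fix z assume "z \<in> bl K S b"
  then have "fst z div K = fst b" "snd z div K = snd b" by (auto simp: bl_def blk_def)
  then show "z \<in> {fst b*K..<fst b*K+K} \<times> {snd b*K..<snd b*K+K}"
    using div_eq_bounds[OF that, of "fst z" "fst b"] div_eq_bounds[OF that, of "snd z" "snd b"]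
    by (cases z) auto
qed

lemma card_bl_box: "0 < K \<Longrightarrow> card (bl K S b) \<le> K*K"
proof -
  assume K: "0 < K"
  have "card (bl K S b) \<le> card ({fst b*K..<fst b*K+K} \<times> {snd b*K..<snd b*K+K})"
    by (rule card_mono[OF _ bl_sub_box[OF K]]) simp
  then show ?thesis by (simp add: card_cartesian_product)
qed

lemma card_bl_proj: "finite S \<Longrightarrow> card (bl K S b) \<le> card (fst ` bl K S b) * card (snd ` bl K S b)"
proof -
  assume fS: "finite S"
  have fb: "finite (bl K S b)" using fS by (simp add: bl_def)
  have "bl K S b \<subseteq> fst ` bl K S b \<times> snd ` bl K S b" by (force simp: image_iff)
  then have "card (bl K S b) \<le> card (fst ` bl K S b \<times> snd ` bl K S b)"
    using fb by (intro card_mono) auto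
  then show ?thesis by (simp add: card_cartesian_product)
qed

lemma mt_step:
  assumes np: "\<not> pcont S k \<rho> \<sigma>" and mr: "\<forall>t<k. \<rho> t < k" and ms: "\<forall>t<k. \<sigma> t < k"
    and sub: "S \<subseteq> sqr (K*M)" and K0: "0 < K"
    and IH: "\<And>S'. S' \<subseteq> sqr M \<Longrightarrow> \<not> pcont S' k \<rho> \<sigma> \<Longrightarrow> card S' \<le> L"
  shows "card S \<le> (k-1)*(k-1)*L + K*K*(2*(M*((k-1)*(K choose k))))"
proof -
  define D where "D = M*((k-1)*(K choose k))"
  have fS: "finite S" by (rule finite_subset[OF sub]) simp
  define B where "B = blk K ` S"
  have Bsub: "B \<subseteq> sqr M" unfolding B_def image_subset_iff using sub blk_sqr[OF K0] by auto
  have fB: "finite B" by (rule finite_subset[OF Bsub]) simp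
  have "\<not> pcont B k \<rho> \<sigma>" using np contract_pcont unfolding B_def by metis
  then have cB: "card B \<le> L" using IH[OF Bsub] by simp
  define W where "W = {b \<in> sqr M. k \<le> card (snd ` bl K S b)}"
  define T where "T = {b \<in> sqr M. k \<le> card (fst ` bl K S b)}"
  have fW: "finite W" "finite T" unfolding W_def T_def by auto
  have cW: "card W \<le> D" unfolding W_def D_def by (rule wide_bound[OF np mr ms sub K0])
  define W' where "W' = {b \<in> sqr M. k \<le> card (snd ` bl K (swp ` S) b)}"
  have cW': "card W' \<le> D" unfolding W'_def D_def
  proof (rule wide_bound[OF _ ms mr swp_sqr[OF sub] K0])
    show "\<not> pcont (swp ` S) k \<sigma> \<rho>" using np pcont_swp by blast
  qed
  have "T \<subseteq> swp ` W'"
  proof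
    fix b assume b: "b \<in> T"
    have "swp b \<in> W'" using b unfolding T_def W'_def
      using bl_swp[of K S b] snd_swp_img[of "bl K S b"] by (auto simp: sqr_def swp_def)
    then show "b \<in> swp ` W'" by (metis image_eqI swp_swp)
  qed
  then have "card T \<le> card (swp ` W')" by (intro card_mono) (auto simp: W'_def)
  also have "\<dots> \<le> card W'" by (rule card_image_le) (simp add: W'_def)
  finally have cT: "card T \<le> D" using cW' by simp
  have per: "card (bl K S b) \<le> (k-1)*(k-1) + (if b \<in> W then K*K else 0) + (if b \<in> T then K*K else 0)"
    if b: "b \<in> B" for b
  proof (cases "b \<in> W \<or> b \<in> T")
    case True
    then show ?thesis using card_bl_box[OF K0, of S b] by auto
  next
    case False
    have bM: "b \<in> sqr M" using b Bsub by blast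
    have "card (fst ` bl K S b) \<le> k - 1" "card (snd ` bl K S b) \<le> k - 1"
      using False bM unfolding W_def T_def by auto
    then have "card (fst ` bl K S b) * card (snd ` bl K S b) \<le> (k-1)*(k-1)"
      by (rule mult_le_mono)
    then show ?thesis using card_bl_proj[OF fS, of K b] False by simp
  qed
  have "S \<subseteq> (\<Union>b\<in>B. bl K S b)"
  proof
    fix z assume z: "z \<in> S"
    show "z \<in> (\<Union>b\<in>B. bl K S b)" using z by (intro UN_I[of "blk K z"]) (auto simp: bl_def B_def)
  qed
  then have "card S \<le> card (\<Union>b\<in>B. bl K S b)" using fB fS by (intro card_mono) (auto simp: bl_def)
  also have "\<dots> \<le> (\<Sum>b\<in>B. card (bl K S b))" using fB by (rule card_UN_le)
  also have "\<dots> \<le> (\<Sum>b\<in>B. (k-1)*(k-1) + (if b \<in> W then K*K else 0) + (if b \<in> T then K*K else 0))"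
    using per by (intro sum_mono) auto
  also have "\<dots> = (k-1)*(k-1)*card B + K*K*card {b\<in>B. b \<in> W} + K*K*card {b\<in>B. b \<in> T}"
    using fB by (simp add: sum.distrib sum.inter_filter[symmetric])
  also have "\<dots> \<le> (k-1)*(k-1)*L + K*K*D + K*K*D"
  proof -
    have "card {b\<in>B. b \<in> W} \<le> D" using cW card_mono[OF fW(1), of "{b\<in>B. b \<in> W}"] by fastforce
    moreover have "card {b\<in>B. b \<in> T} \<le> D" using cT card_mono[OF fW(2), of "{b\<in>B. b \<in> T}"] by fastforce
    ultimately show ?thesis using cB by (intro add_mono mult_le_mono) auto
  qed
  finally show ?thesis unfolding D_def by simp
qed

definition mtc :: "nat \<Rightarrow> nat" where
  "mtc k = (k*k)*(k*k)*(2*((k-1)*((k*k) choose k))) + 1"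

lemma arith_step:
  fixes k c D0 M :: nat
  assumes "1 \<le> k" "c = D0 + 1"
  shows "(k-1)*(k-1)*(c*M) + D0*M \<le> c*((k*k)*M)"
proof -
  obtain k' where k: "k = Suc k'" using assms(1) by (cases k) auto
  have "(k-1)*(k-1)*(c*M) + D0*M \<le> k'*k'*(c*M) + c*M" using assms(2) k by simp
  also have "\<dots> \<le> c*((k*k)*M)" using k by (simp add: algebra_simps)
  finally show ?thesis .
qed

lemma mt_bound:
  assumes mr: "\<forall>t<k. \<rho> t < k" and ms: "\<forall>t<k. \<sigma> t < k" and k1: "1 \<le> k"
  shows "S \<subseteq> sqr ((k*k)^j) \<Longrightarrow> \<not> pcont S k \<rho> \<sigma> \<Longrightarrow> card S \<le> mtc k * (k*k)^j"
proof (induction j arbitrary: S)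
  case 0
  then have "S \<subseteq> {(0,0)}" by (auto simp: sqr_def)
  then have "card S \<le> card {(0::nat,0::nat)}" by (intro card_mono) auto
  then have "card S \<le> 1" by simp
  then show ?case by (simp add: mtc_def)
next
  case (Suc j)
  define K where "K = k*k"
  have K0: "0 < K" using k1 by (simp add: K_def)
  have sub: "S \<subseteq> sqr (K * K^j)" using Suc.prems by (simp add: K_def)
  have "card S \<le> (k-1)*(k-1)*(mtc k * K^j) + K*K*(2*(K^j*((k-1)*(K choose k))))"
    by (rule mt_step[OF Suc.prems(2) mr ms sub K0]) (use Suc.IH in \<open>simp add: K_def\<close>)
  also have "\<dots> = (k-1)*(k-1)*(mtc k * K^j) + (K*K*(2*((k-1)*(K choose k)))) * K^j"
    by (simp add: algebra_simps)
  also have "\<dots> \<le> mtc k * (K * K^j)"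
    using arith_step[OF k1, of "mtc k" "K*K*(2*((k-1)*(K choose k)))" "K^j"]
    by (simp add: mtc_def K_def)
  finally show ?case by (simp add: K_def)
qed

definition AvS :: "nat \<Rightarrow> nat \<Rightarrow> (nat\<Rightarrow>nat) \<Rightarrow> (nat\<Rightarrow>nat) \<Rightarrow> (nat\<times>nat) set set" where
  "AvS n k \<rho> \<sigma> = {S. S \<subseteq> sqr n \<and> \<not> pcont S k \<rho> \<sigma>}"

lemma finite_AvS: "finite (AvS n k \<rho> \<sigma>)"
proof -
  have "AvS n k \<rho> \<sigma> \<subseteq> Pow (sqr n)" by (auto simp: AvS_def)
  then show ?thesis by (rule finite_subset) simp
qed

definition loc :: "nat \<Rightarrow> (nat\<times>nat) set \<Rightarrow> nat\<times>nat \<Rightarrow> (nat\<times>nat) set" where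
  "loc K S b = {z \<in> sqr K. (fst b*K + fst z, snd b*K + snd z) \<in> S}"

definition Phi :: "nat \<Rightarrow> (nat\<times>nat) set \<Rightarrow> (nat\<times>nat) set \<times> (nat\<times>nat \<Rightarrow> (nat\<times>nat) set)" where
  "Phi K S = (blk K ` S, restrict (loc K S) (blk K ` S))"

lemma Phi_sub:
  assumes K0: "0 < K" and eq: "Phi K S = Phi K S'"
  shows "S \<subseteq> S'"
proof
  fix z assume z: "z \<in> S"
  define b where "b = blk K z"
  have bS: "b \<in> blk K ` S" using z unfolding b_def by (rule imageI)
  have e1: "blk K ` S = blk K ` S'" using eq by (simp add: Phi_def)
  have e3: "restrict (loc K S) (blk K ` S) = restrict (loc K S') (blk K ` S')"
    using eq unfolding Phi_def by (rule Pair_inject)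
  have "loc K S b = restrict (loc K S) (blk K ` S) b" using bS by simp
  also have "\<dots> = restrict (loc K S') (blk K ` S') b" using e3 by simp
  also have "\<dots> = loc K S' b" using bS e1 by simp
  finally have e2: "loc K S b = loc K S' b" .
  have m1: "fst z div K * K + fst z mod K = fst z" "snd z div K * K + snd z mod K = snd z"
    by simp_all
  have "(fst z mod K, snd z mod K) \<in> loc K S b"
    using z K0 m1 unfolding loc_def b_def blk_def sqr_def by simp
  then have "(fst z mod K, snd z mod K) \<in> loc K S' b" using e2 by simp
  then show "z \<in> S'" using m1 unfolding loc_def b_def blk_def by simp
qed

lemma count_step:
  assumes K0: "0 < K" and bnd: "\<forall>S\<in>AvS M k \<rho> \<sigma>. card S \<le> L"
  shows "card (AvS (K*M) k \<rho> \<sigma>) \<le> card (AvS M k \<rho> \<sigma>) * (2^(K*K))^L"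
proof -
  define X where "X = Sigma (AvS M k \<rho> \<sigma>) (\<lambda>B. PiE B (\<lambda>_. Pow (sqr K)))"
  have inj: "inj_on (Phi K) (AvS (K*M) k \<rho> \<sigma>)"
  proof (rule inj_onI)
    fix S S' assume "Phi K S = Phi K S'"
    then show "S = S'" using Phi_sub[OF K0, of S S'] Phi_sub[OF K0, of S' S] by simp
  qed
  have img: "Phi K ` AvS (K*M) k \<rho> \<sigma> \<subseteq> X"
  proof
    fix P assume "P \<in> Phi K ` AvS (K*M) k \<rho> \<sigma>"
    then obtain S where S: "S \<in> AvS (K*M) k \<rho> \<sigma>" "P = Phi K S" by (metis imageE)
    have "blk K ` S \<in> AvS M k \<rho> \<sigma>"
    proof -
      have "blk K ` S \<subseteq> sqr M" using S(1) blk_sqr[OF K0] unfolding AvS_def image_subset_iff by auto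
      moreover have "\<not> pcont (blk K ` S) k \<rho> \<sigma>" using S(1) contract_pcont unfolding AvS_def by (metis (mono_tags, lifting) mem_Collect_eq)
      ultimately show ?thesis unfolding AvS_def by simp
    qed
    moreover have "restrict (loc K S) (blk K ` S) \<in> PiE (blk K ` S) (\<lambda>_. Pow (sqr K))"
      by (auto simp: restrict_PiE_iff loc_def)
    ultimately show "P \<in> X" unfolding X_def S(2) Phi_def by simp
  qed
  have finX: "finite X" unfolding X_def
  proof (intro finite_SigmaI finite_AvS finite_PiE)
    fix B assume "B \<in> AvS M k \<rho> \<sigma>"
    then have "B \<subseteq> sqr M" unfolding AvS_def by simp
    then show "finite B" by (rule finite_subset) simp
  qed simp
  have "card (AvS (K*M) k \<rho> \<sigma>) = card (Phi K ` AvS (K*M) k \<rho> \<sigma>)"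
    using inj by (simp add: card_image)
  also have "\<dots> \<le> card X" using img finX by (rule card_mono[rotated])
  also have "\<dots> = (\<Sum>B\<in>AvS M k \<rho> \<sigma>. card (PiE B (\<lambda>_. Pow (sqr K))))"
    unfolding X_def
  proof (rule card_SigmaI[OF finite_AvS])
    show "\<forall>a\<in>AvS M k \<rho> \<sigma>. finite (PiE a (\<lambda>_. Pow (sqr K)))"
    proof
      fix a assume "a \<in> AvS M k \<rho> \<sigma>"
      then have "finite a" unfolding AvS_def using finite_subset[of _ "sqr M"] by simp
      then show "finite (PiE a (\<lambda>_. Pow (sqr K)))" by (intro finite_PiE) auto
    qed
  qed
  also have "\<dots> = (\<Sum>B\<in>AvS M k \<rho> \<sigma>. (2^(K*K))^card B)"
  proof (rule sum.cong[OF refl])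
    fix B assume "B \<in> AvS M k \<rho> \<sigma>"
    then have "finite B" unfolding AvS_def using finite_subset[of _ "sqr M"] by simp
    then show "card (PiE B (\<lambda>_. Pow (sqr K))) = (2^(K*K))^card B"
      by (simp add: card_PiE card_Pow sqr_def card_cartesian_product)
  qed
  also have "\<dots> \<le> (\<Sum>B\<in>AvS M k \<rho> \<sigma>. (2^(K*K))^L)"
    using bnd by (intro sum_mono power_increasing) auto
  also have "\<dots> = card (AvS M k \<rho> \<sigma>) * (2^(K*K))^L" by simp
  finally show ?thesis .
qed

lemma geom_le: "2 \<le> (K::nat) \<Longrightarrow> (\<Sum>i<j. K^i) \<le> K^j"
proof (induction j)
  case 0 then show ?case by simp
next
  case (Suc j)
  then have "(\<Sum>i<Suc j. K^i) \<le> K^j + K^j" by simp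
  also have "\<dots> \<le> K * K^j" using Suc.prems by (metis mult_2 mult_le_mono1)
  finally show ?case by simp
qed

lemma AvS_mono: "n \<le> N \<Longrightarrow> card (AvS n k \<rho> \<sigma>) \<le> card (AvS N k \<rho> \<sigma>)"
  by (intro card_mono finite_AvS) (auto simp: AvS_def sqr_def)

lemma avs_pow:
  assumes mr: "\<forall>t<k. \<rho> t < k" and ms: "\<forall>t<k. \<sigma> t < k" and k1: "1 \<le> k"
  shows "card (AvS ((k*k)^j) k \<rho> \<sigma>) \<le> 2 * (2^((k*k)*(k*k)))^(mtc k * (\<Sum>i<j. (k*k)^i))"
proof (induction j)
  case 0
  have "card (AvS 1 k \<rho> \<sigma>) \<le> card (Pow (sqr 1))"
    by (intro card_mono) (auto simp: AvS_def)
  then show ?case by (simp add: sqr_def card_Pow)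
next
  case (Suc j)
  define K where "K = k*k"
  define X where "X = (2::nat)^(K*K)"
  have K0: "0 < K" using k1 by (simp add: K_def)
  have bnd: "\<forall>S\<in>AvS (K^j) k \<rho> \<sigma>. card S \<le> mtc k * K^j"
  proof
    fix S assume "S \<in> AvS (K^j) k \<rho> \<sigma>"
    then have "S \<subseteq> sqr ((k*k)^j)" "\<not> pcont S k \<rho> \<sigma>" unfolding AvS_def K_def by auto
    then show "card S \<le> mtc k * K^j" unfolding K_def by (rule mt_bound[OF mr ms k1])
  qed
  have "card (AvS (K^Suc j) k \<rho> \<sigma>) = card (AvS (K * K^j) k \<rho> \<sigma>)" by simp
  also have "\<dots> \<le> card (AvS (K^j) k \<rho> \<sigma>) * X^(mtc k * K^j)"
    unfolding X_def by (rule count_step[OF K0 bnd])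
  also have "\<dots> \<le> 2 * X^(mtc k * (\<Sum>i<j. K^i)) * X^(mtc k * K^j)"
    using Suc.IH unfolding K_def X_def by (intro mult_le_mono1) simp
  also have "\<dots> = 2 * X^(mtc k * (\<Sum>i<Suc j. K^i))"
    by (simp add: power_add[symmetric] algebra_simps)
  finally show ?case unfolding K_def X_def .
qed

lemma exists_pow_between:
  assumes "2 \<le> (K::nat)" "1 \<le> n"
  shows "\<exists>j. n \<le> K^j \<and> K^j \<le> K*n"
proof -
  have "n < 2^n" by (rule less_exp)
  also have "(2::nat)^n \<le> K^n" using assms(1) by (rule power_mono) simp
  finally have ex: "\<exists>j. n \<le> K^j" by (intro exI[of _ n]) simp
  define j where "j = (LEAST j. n \<le> K^j)"
  have j: "n \<le> K^j" unfolding j_def by (rule LeastI_ex[OF ex])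
  show ?thesis
  proof (cases j)
    case 0 then show ?thesis using j assms by (intro exI[of _ j]) auto
  next
    case (Suc i)
    then have "i < j" by simp
    then have "\<not> n \<le> K^i" unfolding j_def by (rule not_less_Least)
    then have "K^j \<le> K*n" using Suc by simp
    then show ?thesis using j by blast
  qed
qed

lemma avs_exp:
  assumes mr: "\<forall>t<k. \<rho> t < k" and ms: "\<forall>t<k. \<sigma> t < k" and k2: "2 \<le> k"
  shows "\<exists>Z::nat. 1 \<le> Z \<and> (\<forall>n. card (AvS n k \<rho> \<sigma>) \<le> 2 * Z^n)"
proof -
  define K where "K = k*k"
  define X where "X = (2::nat)^(K*K)"
  have K2: "2 \<le> K" using k2 mult_le_mono[OF k2 k2] unfolding K_def by simp
  have X1: "1 \<le> X" unfolding X_def by simp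
  define Z where "Z = X^(mtc k * K)"
  have pw: "card (AvS (K^j) k \<rho> \<sigma>) \<le> 2 * X^(mtc k * K^j)" for j
  proof -
    have "card (AvS (K^j) k \<rho> \<sigma>) \<le> 2 * X^(mtc k * (\<Sum>i<j. K^i))"
      using avs_pow[OF mr ms, of j] k2 unfolding K_def X_def by simp
    also have "\<dots> \<le> 2 * X^(mtc k * K^j)"
      using geom_le[OF K2, of j] X1 by (intro mult_le_mono2 power_increasing mult_le_mono2) auto
    finally show ?thesis .
  qed
  have "card (AvS n k \<rho> \<sigma>) \<le> 2 * Z^n" for n
  proof (cases "n = 0")
    case True
    have "card (AvS 0 k \<rho> \<sigma>) \<le> card (Pow (sqr 0))"
      by (intro card_mono) (auto simp: AvS_def)
    then show ?thesis using True by (simp add: sqr_def)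
  next
    case False
    then obtain j where j: "n \<le> K^j" "K^j \<le> K*n" using exists_pow_between[OF K2, of n] by auto
    have "card (AvS n k \<rho> \<sigma>) \<le> card (AvS (K^j) k \<rho> \<sigma>)" using j(1) by (rule AvS_mono)
    also have "\<dots> \<le> 2 * X^(mtc k * K^j)" by (rule pw)
    also have "\<dots> \<le> 2 * X^(mtc k * (K*n))"
      using j(2) X1 by (intro mult_le_mono2 power_increasing mult_le_mono2) auto
    also have "\<dots> = 2 * Z^n" unfolding Z_def by (simp add: power_mult mult.assoc)
    finally show ?thesis .
  qed
  moreover have "1 \<le> Z" unfolding Z_def using X1 by simp
  ultimately show ?thesis by blast
qed

definition gr :: "nat list \<Rightarrow> (nat\<times>nat) set" where
  "gr p = (\<lambda>i. (i, p!i - 1)) ` {..<length p}"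

definition sq_of :: "nat list \<Rightarrow> nat \<Rightarrow> nat" where
  "sq_of q t = q!t - 1"

lemma perm_nth_range: "is_perm n p \<Longrightarrow> i < n \<Longrightarrow> 1 \<le> p!i \<and> p!i \<le> n"
proof -
  assume "is_perm n p" "i < n"
  then have "p!i \<in> set p" "set p = {1..n}" "length p = n" by (auto simp: is_perm_def)
  then show ?thesis by auto
qed

lemma gr_sub: "is_perm n p \<Longrightarrow> gr p \<subseteq> sqr n"
proof
  fix z assume p: "is_perm n p" and z: "z \<in> gr p"
  then obtain i where i: "i < length p" "z = (i, p!i - 1)" unfolding gr_def by auto
  have "length p = n" using p by (simp add: is_perm_def)
  then show "z \<in> sqr n" using perm_nth_range[OF p, of i] i by (auto simp: sqr_def)
qed

lemma gr_avoid:
  assumes p: "is_perm n p" and q: "is_perm k q" and av: "avoids p q"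
  shows "\<not> pcont (gr p) k id (sq_of q)"
proof
  assume "pcont (gr p) k id (sq_of q)"
  then obtain f where f: "\<forall>t<k. f t \<in> gr p" "\<forall>i<k. \<forall>j<k. i < j \<longrightarrow> fst (f i) < fst (f j)"
    "\<forall>i<k. \<forall>j<k. sq_of q i < sq_of q j \<longrightarrow> snd (f i) < snd (f j)" unfolding pcont_def by auto
  define ix where "ix t = fst (f t)" for t
  have lp: "length p = n" "length q = k" using p q by (auto simp: is_perm_def)
  have fi: "ix t < n \<and> snd (f t) = p!(ix t) - 1" if "t < k" for t
  proof -
    obtain i where "i < length p" "f t = (i, p!i - 1)" using f(1) \<open>t<k\<close> unfolding gr_def by blast
    then show ?thesis unfolding ix_def using lp by simp
  qed
  have dq: "distinct q" using q by (simp add: is_perm_def)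
  have less: "p!ix r < p!ix s" if "r < k" "s < k" "q!r < q!s" for r s
  proof -
    have "1 \<le> q!r" using perm_nth_range[OF q \<open>r<k\<close>] by simp
    then have "sq_of q r < sq_of q s" using that unfolding sq_of_def by simp
    then have "snd (f r) < snd (f s)" using f(3) that by blast
    then have "p!ix r - 1 < p!ix s - 1" using fi that by simp
    then show ?thesis by simp
  qed
  have "contains p q" unfolding contains_def
  proof (rule exI[of _ ix], intro conjI allI impI)
    fix r s assume "r < s \<and> s < length q"
    then show "ix r < ix s" using f(2) lp unfolding ix_def by auto
  next
    fix r assume "r < length q" then show "ix r < length p" using fi lp by simp
  next
    fix r s assume rs: "r < length q" "s < length q"
    show "p ! ix r < p ! ix s \<longleftrightarrow> q ! r < q ! s"
    proof
      assume "q ! r < q ! s" then show "p ! ix r < p ! ix s" using less rs lp by simp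
    next
      assume pl: "p ! ix r < p ! ix s"
      show "q ! r < q ! s"
      proof (rule ccontr)
        assume "\<not> q ! r < q ! s"
        then have "q!s < q!r \<or> q!r = q!s" by auto
        then show False
        proof
          assume "q!s < q!r" then have "p!ix s < p!ix r" using less rs lp by simp
          then show False using pl by simp
        next
          assume "q!r = q!s" then have "r = s" using dq rs nth_eq_iff_index_eq by blast
          then show False using pl by simp
        qed
      qed
    qed
  qed
  then show False using av by (simp add: avoids_def)
qed

lemma gr_inj: "inj_on gr {p. is_perm n p}"
proof (rule inj_onI)
  fix p p' assume p: "p \<in> {p. is_perm n p}" and p': "p' \<in> {p. is_perm n p}" and e: "gr p = gr p'"
  have lp: "length p = n" "length p' = n" using p p' by (auto simp: is_perm_def)
  show "p = p'"
  proof (rule nth_equalityI)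
    show "length p = length p'" using lp by simp
  next
    fix i assume i: "i < length p"
    have "(i, p!i - 1) \<in> gr p" using i unfolding gr_def by auto
    then have "(i, p!i - 1) \<in> gr p'" using e by simp
    then obtain i' where "i' < length p'" "(i, p!i - 1) = (i', p'!i' - 1)" unfolding gr_def by auto
    then have "p!i - 1 = p'!i - 1" by auto
    moreover have "1 \<le> p!i" "1 \<le> p'!i" using perm_nth_range[of n p i] perm_nth_range[of n p' i] p p' i lp by auto
    ultimately show "p!i = p'!i" by simp
  qed
qed

lemma finite_perms: "finite {p. is_perm n p \<and> P p}"
proof -
  have "{p. is_perm n p \<and> P p} \<subseteq> {xs. set xs \<subseteq> {1..n} \<and> length xs = n}"
    by (auto simp: is_perm_def)
  moreover have "finite {xs. set xs \<subseteq> {1..n} \<and> length xs = n}"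
    by (rule finite_lists_length_eq) simp
  ultimately show ?thesis by (rule finite_subset)
qed

lemma Sav_le_AvS:
  assumes q: "is_perm k q"
  shows "Sav n q \<le> card (AvS n k id (sq_of q))"
proof -
  have "Sav n q \<le> card {p. is_perm n p \<and> avoids p q}"
    unfolding Sav_def by (intro card_mono finite_perms) (auto simp: strongly_avoids_def)
  also have "\<dots> = card (gr ` {p. is_perm n p \<and> avoids p q})"
    by (rule card_image[symmetric]) (rule inj_on_subset[OF gr_inj], auto)
  also have "\<dots> \<le> card (AvS n k id (sq_of q))"
  proof (rule card_mono[OF finite_AvS])
    show "gr ` {p. is_perm n p \<and> avoids p q} \<subseteq> AvS n k id (sq_of q)"
      using gr_sub gr_avoid[OF _ q] unfolding AvS_def by auto
  qed
  finally show ?thesis .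
qed

lemma Sav_exp_bound:
  assumes q: "is_perm k q" and k2: "2 \<le> k"
  shows "\<exists>Z::nat. 1 \<le> Z \<and> (\<forall>n. Sav n q \<le> 2 * Z^n)"
proof -
  have ms: "\<forall>t<k. sq_of q t < k"
  proof (intro allI impI)
    fix t assume "t < k" then show "sq_of q t < k" using perm_nth_range[OF q, of t] unfolding sq_of_def by linarith
  qed
  obtain Z where Z: "1 \<le> Z" "\<forall>n. card (AvS n k id (sq_of q)) \<le> 2 * Z^n"
    using avs_exp[OF _ ms k2, of id] by auto
  show ?thesis using Z Sav_le_AvS[OF q] by (meson le_trans)
qed

definition dsum :: "nat list \<Rightarrow> nat list \<Rightarrow> nat list" where
  "dsum p p' = p @ map (\<lambda>x. x + length p) p'"

lemma length_perm_sq[simp]: "length (perm_sq p) = length p"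
  by (simp add: perm_sq_def del: upt_Suc)

lemma perm_sq_nth: "i < length p \<Longrightarrow> perm_sq p ! i = p ! (p ! i - 1)"
  by (simp add: perm_sq_def pval_def del: upt_Suc)

lemma perm_sq_range:
  assumes "is_perm n p" shows "\<forall>x\<in>set (perm_sq p). 1 \<le> x \<and> x \<le> n"
proof
  fix x assume "x \<in> set (perm_sq p)"
  then obtain i where i: "i < length p" "x = perm_sq p ! i" by (auto simp: in_set_conv_nth)
  have ln: "length p = n" using assms by (simp add: is_perm_def)
  have "1 \<le> p!i \<and> p!i \<le> n" using perm_nth_range[OF assms, of i] i ln by simp
  then have "p!i - 1 < n" by linarith
  then show "1 \<le> x \<and> x \<le> n" using perm_nth_range[OF assms, of "p!i - 1"] i perm_sq_nth by simp
qed

lemma dsum_perm: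
  assumes p: "is_perm m p" and p': "is_perm n p'"
  shows "is_perm (m+n) (dsum p p')"
proof -
  have l: "length p = m" "length p' = n" using p p' by (auto simp: is_perm_def)
  have s: "set p = {1..m}" "set p' = {1..n}" "distinct p" "distinct p'" using p p' by (auto simp: is_perm_def)
  have sm: "set (map (\<lambda>x. x + m) p') = {m+1..m+n}"
  proof -
    have "(\<lambda>x. x + m) ` {1..n} = {m+1..m+n}"
    proof
      show "(\<lambda>x. x + m) ` {1..n} \<subseteq> {m+1..m+n}" by auto
      show "{m+1..m+n} \<subseteq> (\<lambda>x. x + m) ` {1..n}"
      proof
        fix y assume "y \<in> {m+1..m+n}"
        then have "y = (y - m) + m" "y - m \<in> {1..n}" by auto
        then show "y \<in> (\<lambda>x. x + m) ` {1..n}" by (metis imageI)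
      qed
    qed
    then show ?thesis using s by simp
  qed
  have d: "distinct (map (\<lambda>x. x + m) p')" using s(4) by (simp add: distinct_map inj_on_def)
  have "set p \<inter> set (map (\<lambda>x. x + m) p') = {}" using s(1) sm by auto
  then show ?thesis unfolding is_perm_def dsum_def using l s sm d by auto
qed

lemma dsum_sq:
  assumes p: "is_perm m p" and p': "is_perm n p'"
  shows "perm_sq (dsum p p') = dsum (perm_sq p) (perm_sq p')"
proof (rule nth_equalityI)
  have l: "length p = m" "length p' = n" using p p' by (auto simp: is_perm_def)
  show "length (perm_sq (dsum p p')) = length (dsum (perm_sq p) (perm_sq p'))"
    by (simp add: dsum_def)
  fix i assume "i < length (perm_sq (dsum p p'))"
  then have i: "i < m + n" using l by (simp add: dsum_def)
  have dl: "length (dsum p p') = m + n" using l by (simp add: dsum_def)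
  have lhs: "perm_sq (dsum p p') ! i = dsum p p' ! (dsum p p' ! i - 1)"
    using i dl by (simp add: perm_sq_nth)
  show "perm_sq (dsum p p') ! i = dsum (perm_sq p) (perm_sq p') ! i"
  proof (cases "i < m")
    case True
    have r: "1 \<le> p!i \<and> p!i \<le> m" using perm_nth_range[OF p True] .
    have "dsum p p' ! i = p ! i" using True l by (simp add: dsum_def nth_append)
    moreover have "p ! i - 1 < m" using r by linarith
    ultimately have "perm_sq (dsum p p') ! i = p ! (p ! i - 1)" using lhs l by (simp add: dsum_def nth_append)
    moreover have "dsum (perm_sq p) (perm_sq p') ! i = p ! (p ! i - 1)"
      using True l by (simp add: dsum_def nth_append perm_sq_nth)
    ultimately show ?thesis by simp
  next
    case False
    define i' where "i' = i - m"
    have i': "i' < n" "i = m + i'" using False i unfolding i'_def by auto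
    have r: "1 \<le> p'!i' \<and> p'!i' \<le> n" using perm_nth_range[OF p' i'(1)] .
    have "dsum p p' ! i = p' ! i' + m" using i' l by (simp add: dsum_def nth_append)
    moreover have idx: "p' ! i' + m - 1 = m + (p' ! i' - 1)" "p' ! i' - 1 < n" using r by linarith+
    ultimately have "perm_sq (dsum p p') ! i = p' ! (p' ! i' - 1) + m" using lhs l
      by (simp add: dsum_def nth_append)
    moreover have "dsum (perm_sq p) (perm_sq p') ! i = p' ! (p' ! i' - 1) + m"
      using i' l by (simp add: dsum_def nth_append perm_sq_nth)
    ultimately show ?thesis by simp
  qed
qed

lemma dsum_contains:
  assumes la: "\<forall>x\<in>set a. x \<le> length a" and lb: "\<forall>x\<in>set b. 1 \<le> x"
    and ind: "indecomposable q" and c: "contains (dsum a b) q"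
  shows "contains a q \<or> contains b q"
proof -
  define m where "m = length a"
  define L where "L = length q"
  obtain ix where ix: "\<forall>r s. r < s \<and> s < L \<longrightarrow> ix r < ix s" "\<forall>r<L. ix r < length (dsum a b)"
    "\<forall>r<L. \<forall>s<L. (dsum a b ! ix r < dsum a b ! ix s \<longleftrightarrow> q ! r < q ! s)"
    using c unfolding contains_def L_def by blast
  have ld: "length (dsum a b) = m + length b" by (simp add: dsum_def m_def)
  have mono: "ix r \<le> ix s" if "r \<le> s" "s < L" for r s
    using ix(1) that by (auto simp: le_less)
  have na: "dsum a b ! i = a ! i" if "i < m" for i using that by (simp add: dsum_def nth_append m_def)
  have nb: "dsum a b ! i = b ! (i - m) + m" if "m \<le> i" "i < m + length b" for i
    using that by (simp add: dsum_def nth_append m_def)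
  show ?thesis
  proof (cases "\<forall>r<L. ix r < m")
    case True
    have "contains a q" unfolding contains_def
    proof (rule exI[of _ ix], intro conjI allI impI)
      fix r s assume "r < s \<and> s < length q" then show "ix r < ix s" using ix(1) L_def by blast
    next
      fix r assume "r < length q" then show "ix r < length a" using True L_def m_def by simp
    next
      fix r s assume "r < length q" "s < length q"
      then show "a ! ix r < a ! ix s \<longleftrightarrow> q ! r < q ! s" using ix(3) True na L_def by metis
    qed
    then show ?thesis by simp
  next
    case False
    then obtain r0 where r0: "r0 < L" "m \<le> ix r0" by auto
    show ?thesis
    proof (cases "\<forall>r<L. m \<le> ix r")
      case True
      have "contains b q" unfolding contains_def
      proof (rule exI[of _ "\<lambda>r. ix r - m"], intro conjI allI impI)
        fix r s assume "r < s \<and> s < length q" then show "ix r - m < ix s - m"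
          using ix(1) True L_def by (metis diff_less_mono order.strict_trans)
      next
        fix r assume "r < length q" then show "ix r - m < length b" using True ix(2) ld L_def by fastforce
      next
        fix r s assume rs: "r < length q" "s < length q"
        have "dsum a b ! ix r = b ! (ix r - m) + m" "dsum a b ! ix s = b ! (ix s - m) + m"
          using nb True ix(2) ld rs L_def by auto
        moreover have "dsum a b ! ix r < dsum a b ! ix s \<longleftrightarrow> q ! r < q ! s" using ix(3) rs L_def by blast
        ultimately show "b ! (ix r - m) < b ! (ix s - m) \<longleftrightarrow> q ! r < q ! s" by simp
      qed
      then show ?thesis by simp
    next
      case False
      then obtain r1 where r1: "r1 < L" "ix r1 < m" by auto
      define j where "j = (LEAST s. s < L \<and> m \<le> ix s)"
      have jP: "j < L \<and> m \<le> ix j" unfolding j_def by (rule LeastI[of _ r0]) (use r0 in auto)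
      have bef: "ix a' < m" if "a' < j" for a'
      proof -
        have "\<not> (a' < L \<and> m \<le> ix a')" using that unfolding j_def by (rule not_less_Least)
        then show ?thesis using that jP by auto
      qed
      have j0: "0 < j"
      proof (rule ccontr)
        assume "\<not> 0 < j" then have "j = 0" by simp
        then have "m \<le> ix r1" using mono[of 0 r1] r1 jP by simp
        then show False using r1 by simp
      qed
      have "q ! a' < q ! b'" if "a' < j" "j \<le> b'" "b' < L" for a' b'
      proof -
        have A: "ix a' < m" using bef that by simp
        have B: "m \<le> ix b'" using mono[of j b'] that jP by simp
        have a'L: "a' < L" using that by simp
        have "a ! ix a' \<le> m" using la A m_def by simp
        moreover have "ix b' - m < length b" using B ix(2) ld that by fastforce
        then have "1 \<le> b ! (ix b' - m)" using lb by (metis nth_mem)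
        ultimately have "dsum a b ! ix a' < dsum a b ! ix b'"
          using na[OF A] nb[OF B] ix(2) ld that by simp
        then show ?thesis using ix(3) a'L that by blast
      qed
      then have "\<not> indecomposable q" unfolding indecomposable_def L_def using j0 jP L_def by blast
      then show ?thesis using ind by simp
    qed
  qed
qed

lemma Sav_supermult:
  assumes q: "is_perm k q" and ind: "indecomposable q"
  shows "Sav m q * Sav n q \<le> Sav (m+n) q"
proof -
  define A where "A = {p. is_perm m p \<and> strongly_avoids p q}"
  define B where "B = {p. is_perm n p \<and> strongly_avoids p q}"
  define C where "C = {p. is_perm (m+n) p \<and> strongly_avoids p q}"
  have fC: "finite C" unfolding C_def by (rule finite_perms)
  have inj: "inj_on (\<lambda>(p,p'). dsum p p') (A \<times> B)"
  proof (rule inj_onI)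
    fix x y assume x: "x \<in> A \<times> B" and y: "y \<in> A \<times> B" and e: "(\<lambda>(p,p'). dsum p p') x = (\<lambda>(p,p'). dsum p p') y"
    obtain p p' r r' where xy: "x = (p,p')" "y = (r,r')" by (cases x, cases y) auto
    have l: "length p = m" "length r = m" using x y xy unfolding A_def by (auto simp: is_perm_def)
    have "p @ map (\<lambda>x. x + m) p' = r @ map (\<lambda>x. x + m) r'" using e xy l by (simp add: dsum_def)
    then have "p = r" "map (\<lambda>x. x + m) p' = map (\<lambda>x. x + m) r'" using l by (simp_all add: append_eq_append_conv)
    moreover have "inj (\<lambda>x::nat. x + m)" by (simp add: inj_on_def)
    ultimately show "x = y" using xy by (simp add: inj_map_eq_map)
  qed
  have img: "(\<lambda>(p,p'). dsum p p') ` (A \<times> B) \<subseteq> C"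
  proof
    fix z assume "z \<in> (\<lambda>(p,p'). dsum p p') ` (A \<times> B)"
    then obtain p p' where pp: "p \<in> A" "p' \<in> B" "z = dsum p p'" by auto
    have pa: "is_perm m p" "is_perm n p'" "avoids p q" "avoids p' q" "avoids (perm_sq p) q" "avoids (perm_sq p') q"
      using pp unfolding A_def B_def strongly_avoids_def by auto
    have lp: "length p = m" "length p' = n" using pa by (auto simp: is_perm_def)
    have r1: "\<forall>x\<in>set p. x \<le> length p" "\<forall>x\<in>set p'. 1 \<le> x" using pa(1,2) lp by (auto simp: is_perm_def)
    have "\<not> contains (dsum p p') q" using dsum_contains[OF r1 ind] pa(3,4) by (auto simp: avoids_def)
    moreover
    have r2: "\<forall>x\<in>set (perm_sq p). x \<le> length (perm_sq p)" "\<forall>x\<in>set (perm_sq p'). 1 \<le> x"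
      using perm_sq_range[OF pa(1)] perm_sq_range[OF pa(2)] lp by auto
    have "\<not> contains (perm_sq (dsum p p')) q"
      unfolding dsum_sq[OF pa(1,2)] using dsum_contains[OF r2 ind] pa(5,6) by (auto simp: avoids_def)
    ultimately show "z \<in> C" unfolding C_def strongly_avoids_def avoids_def using pp(3) dsum_perm[OF pa(1,2)] by simp
  qed
  have "Sav m q * Sav n q = card (A \<times> B)" unfolding Sav_def A_def B_def by (simp add: card_cartesian_product)
  also have "\<dots> \<le> card C" by (rule card_inj_on_le[OF inj img fC])
  finally show ?thesis unfolding C_def Sav_def .
qed

lemma Sav_pos:
  assumes q: "is_perm k q" and ind: "indecomposable q" and k2: "2 \<le> k"
  shows "1 \<le> Sav n q"
proof -
  define idp where "idp = [1..<n+1]"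
  have lq: "length q = k" using q by (simp add: is_perm_def)
  have ip: "is_perm n idp" unfolding idp_def is_perm_def by auto
  have sq: "perm_sq idp = idp"
    by (rule nth_equalityI) (simp_all add: perm_sq_nth idp_def del: upt_Suc)
  have nc: "\<not> contains idp q"
  proof
    assume "contains idp q"
    then obtain ix where ix: "\<forall>r s. r < s \<and> s < length q \<longrightarrow> ix r < ix s" "\<forall>r<length q. ix r < length idp"
      "\<forall>r<length q. \<forall>s<length q. (idp ! ix r < idp ! ix s \<longleftrightarrow> q ! r < q ! s)"
      unfolding contains_def by blast
    have li: "length idp = n" unfolding idp_def by simp
    have "q ! 0 < q ! b" if "1 \<le> b" "b < length q" for b
    proof -
      have q0: "0 < length q" using that by linarith
      have "ix 0 < ix b" using ix(1) that by simp
      moreover have "ix 0 < n" "ix b < n" using ix(2) that li q0 by auto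
      then have "idp ! ix 0 = ix 0 + 1" "idp ! ix b = ix b + 1"
        unfolding idp_def by (simp_all del: upt_Suc)
      ultimately have "idp ! ix 0 < idp ! ix b" by simp
      then show ?thesis using ix(3) that q0 by blast
    qed
    then have "\<exists>j. 0 < j \<and> j < length q \<and> (\<forall>a < j. \<forall>b. j \<le> b \<and> b < length q \<longrightarrow> q ! a < q ! b)"
      using lq k2 by (intro exI[of _ 1]) auto
    then have "\<not> indecomposable q" unfolding indecomposable_def by simp
    then show False using ind by simp
  qed
  have "idp \<in> {p. is_perm n p \<and> strongly_avoids p q}"
    using ip nc sq unfolding strongly_avoids_def avoids_def by simp
  then have "card {p. is_perm n p \<and> strongly_avoids p q} \<noteq> 0"
    using finite_perms[of n "\<lambda>p. strongly_avoids p q"] card_0_eq by blast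
  then show ?thesis unfolding Sav_def by simp
qed

lemma Sav_small:
  assumes q: "is_perm k q" and k1: "k \<le> 1" and n1: "1 \<le> n"
  shows "Sav n q = 0"
proof -
  have "contains p q" if "is_perm n p" for p
    unfolding contains_def
  proof (rule exI[of _ "\<lambda>_. 0"], intro conjI allI impI)
    have "length q \<le> 1" using q k1 by (simp add: is_perm_def)
    then show "\<And>r s. r < s \<and> s < length q \<Longrightarrow> (0::nat) < 0" by auto
    show "\<And>r. r < length q \<Longrightarrow> 0 < length p" using that n1 by (simp add: is_perm_def)
    fix r s assume "r < length q" "s < length q"
    then have "r = 0" "s = 0" using \<open>length q \<le> 1\<close> by linarith+
    then show "(p ! 0 < p ! 0) = (q ! r < q ! s)" by simp
  qed
  then have "{p. is_perm n p \<and> strongly_avoids p q} = {}" by (auto simp: strongly_avoids_def avoids_def)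
  then show ?thesis unfolding Sav_def by (metis card.empty)
qed

lemma superadd_mult:
  fixes a :: "nat \<Rightarrow> real"
  assumes sup: "\<And>m n. a m + a n \<le> a (m+n)" and nn: "\<And>n. 0 \<le> a n"
  shows "real (n div m) * a m \<le> a n"
proof -
  have A: "real q * a m \<le> a (q*m)" for q
  proof (induction q)
    case 0 then show ?case using nn by simp
  next
    case (Suc q)
    have "real (Suc q) * a m = real q * a m + a m" by (simp add: algebra_simps)
    also have "\<dots> \<le> a (q*m) + a m" using Suc.IH by simp
    also have "\<dots> \<le> a (q*m + m)" by (rule sup)
    finally show ?case by (simp add: add.commute)
  qed
  have "real (n div m) * a m \<le> a ((n div m)*m)" by (rule A)
  also have "\<dots> \<le> a ((n div m)*m) + a (n mod m)" using nn by simp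
  also have "\<dots> \<le> a ((n div m)*m + n mod m)" by (rule sup)
  also have "(n div m)*m + n mod m = n" by simp
  finally show ?thesis .
qed

lemma fekete:
  fixes a :: "nat \<Rightarrow> real"
  assumes sup: "\<And>m n. a m + a n \<le> a (m+n)" and nn: "\<And>n. 0 \<le> a n"
    and bd: "\<And>n. 1 \<le> n \<Longrightarrow> a n / real n \<le> B"
  shows "convergent (\<lambda>n. a n / real n)"
proof -
  define S where "S = (\<lambda>n. a n / real n) ` {1..}"
  have ne: "S \<noteq> {}" unfolding S_def by auto
  have bdd: "bdd_above S" unfolding S_def using bd by (intro bdd_aboveI[of _ B]) auto
  define s where "s = Sup S"
  have up: "a n / real n \<le> s" if "1 \<le> n" for n
    unfolding s_def using bdd that by (intro cSup_upper) (auto simp: S_def)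
  have "(\<lambda>n. a n / real n) \<longlonglongrightarrow> s"
  proof (rule LIMSEQ_I)
    fix r :: real assume r: "0 < r"
    have "s - r/2 < Sup S" using r s_def by simp
    then obtain x where "x \<in> S" "s - r/2 < x" using less_cSup_iff[OF ne bdd] by blast
    then obtain m where m: "1 \<le> m" "s - r/2 < a m / real m" unfolding S_def by auto
    define t where "t = a m / real m"
    have t0: "0 \<le> t" unfolding t_def using nn by simp
    have mpos: "0 < real m" using m by simp
    define N where "N = nat \<lceil>2 * real m * t / r\<rceil> + m + 1"
    show "\<exists>no. \<forall>n\<ge>no. norm (a n / real n - s) < r"
    proof (intro exI allI impI)
      fix n assume n: "N \<le> n"
      have n1: "1 \<le> n" using n unfolding N_def by simp
      have npos: "0 < real n" using n1 by simp
      have "2 * real m * t / r \<le> real (nat \<lceil>2 * real m * t / r\<rceil>)" by linarith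
      then have "2 * real m * t / r < real n" using n unfolding N_def by linarith
      then have c1: "2 * real m * t < real n * r" using r by (simp add: divide_less_eq mult.commute)
      have dm: "real n - real m \<le> real (n div m) * real m"
      proof -
        have "n = (n div m) * m + n mod m" by simp
        then have "real n = real (n div m) * real m + real (n mod m)" by (metis of_nat_add of_nat_mult)
        moreover have "n mod m < m" using m by simp
        ultimately show ?thesis by linarith
      qed
      have "(real n - real m) * t \<le> real (n div m) * real m * t" using dm t0 by (rule mult_right_mono)
      also have "\<dots> = real (n div m) * a m" unfolding t_def using mpos by simp
      also have "\<dots> \<le> a n" by (rule superadd_mult[OF sup nn])
      finally have lo: "(real n - real m) * t \<le> a n" .
      have "real n * (s - r) < real n * t - real m * t"
      proof -
        have "real n * (s - r) = real n * (s - r/2) - real n * (r/2)" by (simp add: algebra_simps)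
        also have "\<dots> < real n * t - real n * (r/2)"
          using mult_strict_left_mono[OF m(2) npos] unfolding t_def by simp
        also have "\<dots> < real n * t - real m * t" using c1 by simp
        finally show ?thesis .
      qed
      also have "\<dots> \<le> a n" using lo by (simp add: algebra_simps)
      finally have "s - r < a n / real n" using npos by (simp add: field_simps)
      moreover have "a n / real n \<le> s" by (rule up[OF n1])
      ultimately show "norm (a n / real n - s) < r" by simp
    qed
  qed
  then show ?thesis unfolding convergent_def by blast
qed

theorem proposition5p1:
  fixes q :: "nat list" and k :: nat
  assumes "is_perm k q" and "indecomposable q"
  shows "convergent (\<lambda>n. root n (real (Sav n q)))"
proof (cases "k \<le> 1")
  case True
  have "(\<lambda>n. root n (real (Sav n q))) = (\<lambda>n. 0)"
  proof
    fix n show "root n (real (Sav n q)) = 0"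
    proof (cases "n = 0")
      case True then show ?thesis by simp
    next
      case False
      then have "Sav n q = 0" using Sav_small[OF assms(1) \<open>k \<le> 1\<close>] by simp
      then show ?thesis by simp
    qed
  qed
  then show ?thesis by (simp add: convergent_const)
next
  case False
  then have k2: "2 \<le> k" by simp
  define a where "a n = ln (real (Sav n q))" for n
  have pos: "1 \<le> real (Sav n q)" for n using Sav_pos[OF assms k2, of n] by simp
  have sup: "a m + a n \<le> a (m+n)" for m n
  proof -
    have "a m + a n = ln (real (Sav m q) * real (Sav n q))"
      unfolding a_def using pos[of m] pos[of n] by (simp add: ln_mult)
    also have "\<dots> \<le> a (m+n)" unfolding a_def
      using Sav_supermult[OF assms, of m n] pos[of m] pos[of n] pos[of "m+n"]
      by (subst ln_le_cancel_iff) (auto simp flip: of_nat_mult)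
    finally show ?thesis .
  qed
  have nn: "0 \<le> a n" for n unfolding a_def using pos[of n] by simp
  obtain Z :: nat where Z: "1 \<le> Z" "\<forall>n. Sav n q \<le> 2 * Z^n" using Sav_exp_bound[OF assms(1) k2] by blast
  have bd: "a n / real n \<le> ln 2 + ln (real Z)" if n1: "1 \<le> n" for n
  proof -
    have Zp: "0 < real Z" using Z by simp
    have "real (Sav n q) \<le> 2 * real Z ^ n" using Z(2) by (metis of_nat_le_iff of_nat_mult of_nat_numeral of_nat_power)
    then have "a n \<le> ln (2 * real Z ^ n)" unfolding a_def using pos[of n] Zp
      by (subst ln_le_cancel_iff) auto
    also have "\<dots> = ln 2 + real n * ln (real Z)" using Zp by (simp add: ln_mult ln_realpow)
    finally have "a n \<le> ln 2 + real n * ln (real Z)" .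
    then have "a n / real n \<le> ln 2 / real n + ln (real Z)" using n1 by (simp add: field_simps)
    also have "ln 2 / real n \<le> ln 2" using n1 by (simp add: divide_le_eq)
    finally show ?thesis by simp
  qed
  have "convergent (\<lambda>n. a n / real n)" by (rule fekete[OF sup nn bd])
  then obtain L where L: "(\<lambda>n. a n / real n) \<longlonglongrightarrow> L" unfolding convergent_def by blast
  then have E: "(\<lambda>n. exp (a n / real n)) \<longlonglongrightarrow> exp L" by (rule tendsto_exp)
  have ev: "\<forall>\<^sub>F n in sequentially. exp (a n / real n) = root n (real (Sav n q))"
  proof (rule eventually_sequentiallyI[of 1])
    fix n :: nat assume n: "1 \<le> n"
    have "root n (real (Sav n q)) = real (Sav n q) powr (1 / real n)"
      using n pos[of n] by (intro root_powr_inverse) auto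
    also have "\<dots> = exp (a n / real n)" unfolding a_def powr_def using pos[of n] by simp
    finally show "exp (a n / real n) = root n (real (Sav n q))" by simp
  qed
  have "(\<lambda>n. root n (real (Sav n q))) \<longlonglongrightarrow> exp L" by (rule Lim_transform_eventually[OF E ev])
  then show ?thesis unfolding convergent_def by blast
qed

end
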